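(* Let $(G,q)$ be a pointed graph and $k\ge 0$ an integer. (1) For every oriented $k$-spanning tree $\mathcal T$ of $(G,q)$, the divisor $D_{\mathcal T}$ is $q$-reduced. (2) For every $q$-reduced divisor $D$ with $D(q)=-1$ and $\deg(D)=k-1$, there exists an oriented $k$-spanning tree $\mathcal T$ of $(G,q)$ with $D_{\mathcal T}\sim D$.
   Context: $G$ is a finite connected multigraph without loops with $n$ vertices, $q\in V(G)$. $\mathbb E(G)$ is the set of oriented edges (each edge gives two opposite oriented edges $e,\bar e$, with head $e_+$ and tail $e_-$). For a set $\mathcal P\subseteq\mathbb E(G)$, $\mathrm{indeg}_{\mathcal P}(v)=|\{e\in\mathcal P:e_+=v\}|$ and $D_{\mathcal P}=\sum_v(\mathrm{indeg}_{\mathcal P}(v)-1)(v)$. An oriented $k$-spanning tree of $(G,q)$ is a subset $\mathcal T\subseteq\mathbb E(G)$ with $|\mathcal T|=n-1+k$ such that the directed graph $(V(G),\mathcal T)$ has no directed cycle, $\mathrm{indeg}_{\mathcal T}(q)=0$, and $\mathrm{indeg}_{\mathcal T}(v)\ge1$ for all $v\neq q$ (so $q$ is its unique source). A divisor is an integer combination $D=\sum_v D(v)(v)$ of vertices, $\deg D=\sum_v D(v)$. $D$ is $q$-reduced if $D(v)\ge 0$ for all $v\ne q$ and for every nonempty $A\subseteq V(G)\setminus\{q\}$ there is $v\in A$ such that $D(v)$ is less than the number of edges joining $v$ to vertices outside $A$. Linear equivalence: $D_1\sim D_2$ iff $D_2=D_1-\Delta(f)$ for some $f:V(G)\to\mathbb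 Z$, where $\Delta(f)=\sum_v\sum_{\{v,w\}\in E(G)}(f(v)-f(w))(v)$. *)

theory Defs
  imports Main
begin

text \<open>A finite loopless multigraph: vertex set V, edge set E, and each edge e has
  an (arbitrary reference) pair of distinct endpoints ends e.
  Oriented edges are pairs (e, b): (e, True) goes from fst (ends e) to snd (ends e),
  (e, False) is the opposite orientation.\<close>

definition multigraph :: "'v set \<Rightarrow> 'e set \<Rightarrow> ('e \<Rightarrow> 'v \<times> 'v) \<Rightarrow> bool" where
  "multigraph V E ends \<longleftrightarrow> finite V \<and> finite E \<and>
     (\<forall>e\<in>E. fst (ends e) \<in> V \<and> snd (ends e) \<in> V \<and> fst (ends e) \<noteq> snd (ends e))"

definition adj_rel :: "'e set \<Rightarrow> ('e \<Rightarrow> 'v \<times> 'v) \<Rightarrow> ('v \<times> 'v) set" where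
  "adj_rel E ends = {(fst (ends e), snd (ends e)) | e. e \<in> E} \<union> {(snd (ends e), fst (ends e)) | e. e \<in> E}"

definition connected_graph :: "'v set \<Rightarrow> 'e set \<Rightarrow> ('e \<Rightarrow> 'v \<times> 'v) \<Rightarrow> bool" where
  "connected_graph V E ends \<longleftrightarrow> V \<noteq> {} \<and> (\<forall>u\<in>V. \<forall>v\<in>V. (u, v) \<in> (adj_rel E ends)\<^sup>*)"

definition oriented_edges :: "'e set \<Rightarrow> ('e \<times> bool) set" where
  "oriented_edges E = E \<times> UNIV"

definition head :: "('e \<Rightarrow> 'v \<times> 'v) \<Rightarrow> 'e \<times> bool \<Rightarrow> 'v" where
  "head ends d = (if snd d then snd (ends (fst d)) else fst (ends (fst d)))"

definition tail :: "('e \<Rightarrow> 'v \<times> 'v) \<Rightarrow> 'e \<times> bool \<Rightarrow> 'v" where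
  "tail ends d = (if snd d then fst (ends (fst d)) else snd (ends (fst d)))"

definition indeg :: "('e \<Rightarrow> 'v \<times> 'v) \<Rightarrow> ('e \<times> bool) set \<Rightarrow> 'v \<Rightarrow> nat" where
  "indeg ends P v = card {d \<in> P. head ends d = v}"

text \<open>Divisors are functions 'v \<Rightarrow> int; only their values on V matter.\<close>
type_synonym 'v divisor = "'v \<Rightarrow> int"

definition div_of :: "'v set \<Rightarrow> ('e \<Rightarrow> 'v \<times> 'v) \<Rightarrow> ('e \<times> bool) set \<Rightarrow> 'v divisor" where
  "div_of V ends P = (\<lambda>v. if v \<in> V then int (indeg ends P v) - 1 else 0)"

definition deg :: "'v set \<Rightarrow> 'v divisor \<Rightarrow> int" where
  "deg V D = (\<Sum>v\<in>V. D v)"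

definition oriented_k_spanning_tree ::
  "'v set \<Rightarrow> 'e set \<Rightarrow> ('e \<Rightarrow> 'v \<times> 'v) \<Rightarrow> 'v \<Rightarrow> nat \<Rightarrow> ('e \<times> bool) set \<Rightarrow> bool" where
  "oriented_k_spanning_tree V E ends q k T \<longleftrightarrow>
     T \<subseteq> oriented_edges E \<and>
     card T = card V - 1 + k \<and>
     acyclic {(tail ends d, head ends d) | d. d \<in> T} \<and>
     indeg ends T q = 0 \<and>
     (\<forall>v\<in>V. v \<noteq> q \<longrightarrow> indeg ends T v \<ge> 1)"

definition out_edges :: "'v set \<Rightarrow> 'e set \<Rightarrow> ('e \<Rightarrow> 'v \<times> 'v) \<Rightarrow> 'v set \<Rightarrow> 'v \<Rightarrow> nat" where
  "out_edges V E ends A v = card {e \<in> E.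
      (fst (ends e) = v \<and> snd (ends e) \<in> V - A) \<or> (snd (ends e) = v \<and> fst (ends e) \<in> V - A)}"

definition q_reduced :: "'v set \<Rightarrow> 'e set \<Rightarrow> ('e \<Rightarrow> 'v \<times> 'v) \<Rightarrow> 'v \<Rightarrow> 'v divisor \<Rightarrow> bool" where
  "q_reduced V E ends q D \<longleftrightarrow>
     (\<forall>v\<in>V - {q}. D v \<ge> 0) \<and>
     (\<forall>A. A \<subseteq> V - {q} \<and> A \<noteq> {} \<longrightarrow> (\<exists>v\<in>A. D v < int (out_edges V E ends A v)))"

definition laplacian :: "'e set \<Rightarrow> ('e \<Rightarrow> 'v \<times> 'v) \<Rightarrow> ('v \<Rightarrow> int) \<Rightarrow> 'v divisor" where
  "laplacian E ends f = (\<lambda>v.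
      (\<Sum>e\<in>{e \<in> E. fst (ends e) = v}. f v - f (snd (ends e))) +
      (\<Sum>e\<in>{e \<in> E. snd (ends e) = v}. f v - f (fst (ends e))))"

definition lin_equiv :: "'v set \<Rightarrow> 'e set \<Rightarrow> ('e \<Rightarrow> 'v \<times> 'v) \<Rightarrow> 'v divisor \<Rightarrow> 'v divisor \<Rightarrow> bool" where
  "lin_equiv V E ends D1 D2 \<longleftrightarrow>
     (\<exists>f :: 'v \<Rightarrow> int. \<forall>v\<in>V. D2 v = D1 v - laplacian E ends f v)"

end

theory Submission
  imports Defs
begin

lemma part1:
  assumes mg: "multigraph V E ends" and qV: "q \<in> V"
    and T: "oriented_k_spanning_tree V E ends q k T"
  shows "q_reduced V E ends q (div_of V ends T)"
proof -
  have fE: "finite E" and ends: "\<And>e. e \<in> E \<Longrightarrow> fst (ends e) \<in> V \<and> snd (ends e) \<in> V \<and> fst (ends e) \<noteq> snd (ends e)"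
    using mg unfolding multigraph_def by auto
  have TE: "T \<subseteq> E \<times> UNIV" using T unfolding oriented_k_spanning_tree_def oriented_edges_def by (elim conjE)
  have fT: "finite T" using TE fE by (metis finite_SigmaI finite_UNIV finite_subset)
  let ?R = "{(tail ends d, head ends d) | d. d \<in> T}"
  have acyc: "acyclic ?R" using T unfolding oriented_k_spanning_tree_def by (elim conjE)
  have "?R = (\<lambda>d. (tail ends d, head ends d)) ` T" by auto
  hence fR: "finite ?R" using fT by simp
  have wfR: "wf ?R" using finite_acyclic_wf[OF fR acyc] .
  show ?thesis unfolding q_reduced_def
  proof (intro conjI allI impI ballI)
    fix v assume v: "v \<in> V - {q}"
    hence "indeg ends T v \<ge> 1" using T unfolding oriented_k_spanning_tree_def by blast
    thus "0 \<le> div_of V ends T v" using v unfolding div_of_def by auto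
  next
    fix A assume A: "A \<subseteq> V - {q} \<and> A \<noteq> {}"
    then obtain x where "x \<in> A" by auto
    then obtain v where vA: "v \<in> A" and vmin: "\<And>y. (y, v) \<in> ?R \<Longrightarrow> y \<notin> A"
      using wfE_min[OF wfR \<open>x \<in> A\<close>] by blast
    let ?I = "{d \<in> T. head ends d = v}"
    let ?O = "{e \<in> E. (fst (ends e) = v \<and> snd (ends e) \<in> V - A) \<or> (snd (ends e) = v \<and> fst (ends e) \<in> V - A)}"
    have inj: "inj_on fst ?I"
    proof (rule inj_onI)
      fix d d' assume d: "d \<in> ?I" and d': "d' \<in> ?I" and eq: "fst d = fst d'"
      obtain e b where de: "d = (e, b)" by (cases d)
      obtain b' where de': "d' = (e, b')" using eq de by (cases d') auto
      have "e \<in> E" using d de TE by auto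
      hence "fst (ends e) \<noteq> snd (ends e)" using ends by auto
      thus "d = d'" using d d' de de' unfolding head_def by (cases b; cases b') auto
    qed
    have sub: "fst ` ?I \<subseteq> ?O"
    proof
      fix e assume "e \<in> fst ` ?I"
      then obtain b where d: "(e, b) \<in> T" "head ends (e, b) = v" by force
      have eE: "e \<in> E" using d TE by auto
      have "(tail ends (e, b), v) \<in> ?R" using d by force
      hence tA: "tail ends (e, b) \<notin> A" using vmin by blast
      show "e \<in> ?O" using d(2) tA eE ends[OF eE] unfolding head_def tail_def
        by (cases b) auto
    qed
    have fO: "finite ?O" using fE by simp
    have "indeg ends T v = card (fst ` ?I)" unfolding indeg_def using card_image[OF inj] by simp
    also have "\<dots> \<le> card ?O" using card_mono[OF fO sub] .
    finally have "indeg ends T v \<le> out_edges V E ends A v" unfolding out_edges_def .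
    hence "div_of V ends T v < int (out_edges V E ends A v)"
      using vA A unfolding div_of_def by auto
    thus "\<exists>v\<in>A. div_of V ends T v < int (out_edges V E ends A v)" using vA by blast
  qed
qed

lemma burn:
  assumes mg: "multigraph V E ends" and red: "q_reduced V E ends q D"
  shows "n = card (V - S) \<Longrightarrow> q \<in> S \<Longrightarrow> S \<subseteq> V \<Longrightarrow>
    \<exists>T r. T \<subseteq> oriented_edges E \<and> finite T \<and>
      (\<forall>d\<in>T. head ends d \<in> V - S \<and> (r (tail ends d) :: nat) < r (head ends d)) \<and>
      (\<forall>x\<in>S. r x = 0) \<and>
      (\<forall>w\<in>V - S. indeg ends T w = nat (D w) + 1) \<and>
      card T = (\<Sum>w\<in>V - S. nat (D w) + 1)"
proof (induction n arbitrary: S rule: less_induct)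
  case (less n S)
  have fE: "finite E" and fV: "finite V" and ends: "\<And>e. e \<in> E \<Longrightarrow> fst (ends e) \<in> V \<and> snd (ends e) \<in> V \<and> fst (ends e) \<noteq> snd (ends e)"
    using mg unfolding multigraph_def by auto
  show ?case
  proof (cases "V - S = {}")
    case True
    show ?thesis
      by (rule exI[of _ "{}"], rule exI[of _ "\<lambda>_. 0"]) (simp add: True indeg_def)
  next
    case False
    let ?A = "V - S"
    have "?A \<subseteq> V - {q}" using less.prems by auto
    then obtain v where vA: "v \<in> ?A" and vlt: "D v < int (out_edges V E ends ?A v)"
      using red False unfolding q_reduced_def by blast
    have Dv: "D v \<ge> 0" using red vA less.prems unfolding q_reduced_def by auto
    have VA: "V - ?A = S" using less.prems by auto
    let ?Ev = "{e \<in> E. (fst (ends e) = v \<and> snd (ends e) \<in> S) \<or> (snd (ends e) = v \<and> fst (ends e) \<in> S)}"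
    have "nat (D v) + 1 \<le> card ?Ev" using vlt Dv unfolding out_edges_def VA by auto
    then obtain F where FE: "F \<subseteq> ?Ev" and cF: "card F = nat (D v) + 1" and fF: "finite F"
      by (rule obtain_subset_with_card_n)
    define Tv where "Tv = (\<lambda>e. (e, snd (ends e) = v)) ` F"
    have Tvprop: "\<And>d. d \<in> Tv \<Longrightarrow> head ends d = v \<and> tail ends d \<in> S \<and> fst d \<in> E"
    proof -
      fix d assume "d \<in> Tv"
      then obtain e where e: "e \<in> F" "d = (e, snd (ends e) = v)" unfolding Tv_def by auto
      have eE: "e \<in> E" using e FE by auto
      show "head ends d = v \<and> tail ends d \<in> S \<and> fst d \<in> E"
        using e FE ends[OF eE] unfolding head_def tail_def by auto
    qed
    have cTv: "card Tv = nat (D v) + 1" unfolding Tv_def using cF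
      by (subst card_image) (auto intro: inj_onI)
    let ?S' = "insert v S"
    have lt: "card (V - ?S') < n" using less.prems vA fV
      by (metis Diff_insert card_Diff1_less finite_Diff)
    obtain T' r' where T': "T' \<subseteq> oriented_edges E" "finite T'"
      "\<forall>d\<in>T'. head ends d \<in> V - ?S' \<and> (r' (tail ends d) :: nat) < r' (head ends d)"
      "\<forall>x\<in>?S'. r' x = 0"
      "\<forall>w\<in>V - ?S'. indeg ends T' w = nat (D w) + 1"
      "card T' = (\<Sum>w\<in>V - ?S'. nat (D w) + 1)"
      using less.IH[OF lt refl] less.prems vA by auto
    define r where "r = (\<lambda>x. if x \<in> S then 0 else r' x + 1)"
    define T where "T = T' \<union> Tv"
    have fTv: "finite Tv" unfolding Tv_def using fF by simp
    have "T \<subseteq> oriented_edges E" unfolding T_def oriented_edges_def using T'(1) Tvprop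
      unfolding oriented_edges_def by force
    moreover have "finite T" unfolding T_def using T'(2) fTv by simp
    moreover have "\<forall>d\<in>T. head ends d \<in> V - S \<and> r (tail ends d) < r (head ends d)"
    proof
      fix d assume "d \<in> T"
      hence "d \<in> T' \<or> d \<in> Tv" unfolding T_def by simp
      thus "head ends d \<in> V - S \<and> r (tail ends d) < r (head ends d)"
      proof (elim disjE)
        assume d: "d \<in> T'"
        hence h: "head ends d \<in> V - ?S'" "r' (tail ends d) < r' (head ends d)" using T'(3) by auto
        have "r (tail ends d) \<le> r' (tail ends d) + 1" unfolding r_def by auto
        thus ?thesis using h unfolding r_def by auto
      next
        assume d: "d \<in> Tv"
        thus ?thesis using Tvprop[OF d] vA unfolding r_def by auto
      qed
    qed
    moreover have "\<forall>x\<in>S. r x = 0" unfolding r_def by auto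
    moreover have "\<forall>w\<in>V - S. indeg ends T w = nat (D w) + 1"
    proof
      fix w assume w: "w \<in> V - S"
      show "indeg ends T w = nat (D w) + 1"
      proof (cases "w = v")
        case True
        have "{d \<in> T. head ends d = w} = Tv" unfolding T_def using T'(3) Tvprop True by auto
        thus ?thesis using cTv True unfolding indeg_def by simp
      next
        case False
        have "{d \<in> T. head ends d = w} = {d \<in> T'. head ends d = w}"
          unfolding T_def using Tvprop False by auto
        thus ?thesis using T'(5) w False unfolding indeg_def by simp
      qed
    qed
    moreover have "card T = (\<Sum>w\<in>V - S. nat (D w) + 1)"
    proof -
      have disj: "T' \<inter> Tv = {}"
      proof (rule ccontr)
        assume "T' \<inter> Tv \<noteq> {}"
        then obtain d where d: "d \<in> T'" "d \<in> Tv" by blast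
        have "head ends d \<in> V - ?S'" using T'(3) d(1) by blast
        moreover have "head ends d = v" using Tvprop[OF d(2)] by blast
        ultimately show False by blast
      qed
      have c1: "card T = card T' + card Tv" unfolding T_def using card_Un_disjoint[OF T'(2) fTv disj] .
      have e1: "V - S = insert v (V - ?S')" using vA by blast
      have fin: "finite (V - ?S')" using fV by simp
      have nin: "v \<notin> V - ?S'" by blast
      have "(\<Sum>w\<in>V - S. nat (D w) + 1) = (nat (D v) + 1) + (\<Sum>w\<in>V - ?S'. nat (D w) + 1)"
        unfolding e1 by (rule sum.insert[OF fin nin])
      thus ?thesis using c1 T'(6) cTv by linarith
    qed
    ultimately show ?thesis
      apply -
      apply (rule exI[of _ T], rule exI[of _ r])
      apply (intro conjI)
           apply assumption+
      done
  qed
qed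

theorem mainTheorem2:
  fixes V :: "'v set" and E :: "'e set" and ends :: "'e \<Rightarrow> 'v \<times> 'v"
    and q :: 'v and k :: nat
  assumes "multigraph V E ends" and "connected_graph V E ends" and "q \<in> V"
  shows "(\<forall>T. oriented_k_spanning_tree V E ends q k T \<longrightarrow>
            q_reduced V E ends q (div_of V ends T))
       \<and> (\<forall>D :: 'v divisor. q_reduced V E ends q D \<and> D q = -1 \<and> deg V D = int k - 1 \<longrightarrow>
            (\<exists>T. oriented_k_spanning_tree V E ends q k T \<and>
                 lin_equiv V E ends (div_of V ends T) D))"
proof (intro conjI allI impI)
  fix T assume "oriented_k_spanning_tree V E ends q k T"
  thus "q_reduced V E ends q (div_of V ends T)" by (rule part1[OF assms(1,3)])
next
  fix D :: "'v divisor"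
  assume H: "q_reduced V E ends q D \<and> D q = -1 \<and> deg V D = int k - 1"
  have fV: "finite V" using assms(1) unfolding multigraph_def by auto
  obtain T r where T: "T \<subseteq> oriented_edges E" "finite T"
      "\<forall>d\<in>T. head ends d \<in> V - {q} \<and> (r (tail ends d) :: nat) < r (head ends d)"
      "\<forall>w\<in>V - {q}. indeg ends T w = nat (D w) + 1"
      "card T = (\<Sum>w\<in>V - {q}. nat (D w) + 1)"
    using burn[OF assms(1), of q D "card (V - {q})" "{q}"] H assms(3) by auto
  have Dnn: "\<forall>w\<in>V - {q}. D w \<ge> 0" using H unfolding q_reduced_def by auto
  have "int (card T) = (\<Sum>w\<in>V - {q}. int (nat (D w) + 1))" using T(5) by simp
  also have "\<dots> = (\<Sum>w\<in>V - {q}. D w + 1)" using Dnn by (intro sum.cong) auto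
  also have "\<dots> = (\<Sum>w\<in>V - {q}. D w) + int (card (V - {q}))" by (simp add: sum.distrib)
  also have "(\<Sum>w\<in>V - {q}. D w) = deg V D - D q"
    unfolding deg_def using sum.remove[OF fV assms(3), of D] by simp
  finally have cT: "int (card T) = int k + int (card V - 1)" using H assms(3) fV by simp
  have cT': "card T = card V - 1 + k" using cT by simp
  have "{d \<in> T. head ends d = q} = {}" using T(3) by auto
  hence q0: "indeg ends T q = 0" unfolding indeg_def by (metis card.empty)
  have acyc: "acyclic {(tail ends d, head ends d) | d. d \<in> T}"
  proof (rule acyclic_subset)
    show "acyclic (inv_image less_than r)" by (rule wf_acyclic) simp
    show "{(tail ends d, head ends d) | d. d \<in> T} \<subseteq> inv_image less_than r" using T(3) by auto
  qed
  have ok: "oriented_k_spanning_tree V E ends q k T"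
    unfolding oriented_k_spanning_tree_def
    by (intro conjI T(1) cT' q0 acyc ballI impI) (use T(4) in auto)
  have "lin_equiv V E ends (div_of V ends T) D"
    unfolding lin_equiv_def
  proof (rule exI[of _ "\<lambda>_. 0"], intro ballI)
    fix v assume v: "v \<in> V"
    have "laplacian E ends (\<lambda>_. 0) v = 0" unfolding laplacian_def by simp
    moreover have "D v = div_of V ends T v"
    proof (cases "v = q")
      case True thus ?thesis using q0 H v unfolding div_of_def by simp
    next
      case False thus ?thesis using T(4) Dnn v unfolding div_of_def by auto
    qed
    ultimately show "D v = div_of V ends T v - laplacian E ends (\<lambda>_. 0) v" by simp
  qed
  thus "\<exists>T. oriented_k_spanning_tree V E ends q k T \<and> lin_equiv V E ends (div_of V ends T) D"
    using ok by blast
qed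

end
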